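(* Suppose Assumption 1 holds, let $\gamma\in(0,1)$ be as in the context, and let $c_J\ge1/\gamma$. Then for every $\theta\in\mathbb{R}^{|\mathcal{S}||\mathcal{A}|}$, $\mu\in\Delta_{\mathcal{S}}$, $V\in\mathbb{R}^{|\mathcal{S}|}$ and $J\in\mathbb{R}$, $$\Big\langle\begin{bmatrix}\Pi_{\mathcal{E}_\perp}(V-V^{\pi_\theta,\mu})\\ J-J(\pi_\theta,\mu)\end{bmatrix},\begin{bmatrix}\Pi_{\mathcal{E}_\perp}\bar G^V(\theta,V,J,\mu)\\ \bar G^J(\theta,J,\mu)\end{bmatrix}\Big\rangle\le-\frac{\gamma}{2}\Big(\|\Pi_{\mathcal{E}_\perp}(V-V^{\pi_\theta,\mu})\|^2+(J-J(\pi_\theta,\mu))^2\Big).$$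
   Context: $\mathcal{S},\mathcal{A}$ are finite sets. A mean field game has, for each mean field $\mu\in\Delta_{\mathcal{S}}$, a transition kernel $\mathcal{P}^\mu(s'\mid s,a)$ and a reward $r(s,a,\mu)\in[0,1]$. For a policy $\pi$, $P^{\pi,\mu}_{s',s}=\sum_a\mathcal{P}^\mu(s'\mid s,a)\pi(a\mid s)$ has stationary distribution $\nu^{\pi,\mu}$; $J(\pi,\mu)=\mathbb{E}_{s\sim\nu^{\pi,\mu},a\sim\pi(\cdot\mid s)}[r(s,a,\mu)]$; $V^{\pi,\mu}(s)=\mathbb{E}[\sum_{t\ge0}(r(s_t,a_t,\mu)-J(\pi,\mu))\mid s_0=s]$ with $a_t\sim\pi(\cdot\mid s_t)$, $s_{t+1}\sim\mathcal{P}^\mu(\cdot\mid s_t,a_t)$. Softmax policies $\pi_\theta(a\mid s)=\exp(\theta(s,a))/\sum_{a'}\exp(\theta(s,a'))$. $e_s$ is the indicator vector of $s$; $\Pi_{\mathcal{E}_\perp}=I-\mathbf{1}\mathbf{1}^\top/|\mathcal{S}|$ is the orthogonal projection onto the complement $\mathcal{E}_\perp$ of the span of the all-ones vector. With expectations over $s\sim\nu^{\pi_\theta,\mu},a\sim\pi_\theta(\cdot\mid s),s'\sim\mathcal{P}^\mu(\cdot\mid s,a)$: $\bar G^V(\theta,V,J,\mu)=\mathbb{E}[(r(s,a,\mu)-J+V(s')-V(s))e_s]$ and $\bar G^J(\theta,J,\mu)=\mathbb{E}[c_J(r(s,a,\mu)-J)]$ for a constant $c_J>0$. Norms are Euclidean.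 Assumption 1: for all $\pi,\mu$ the chain $P^{\pi,\mu}$ is irreducible and aperiodic and there are $C_0\ge1,C_1\in(0,1)$ with $\sup_sd_{TV}(\mathbb{P}(s_k=\cdot\mid s_0=s),\nu^{\pi,\mu})\le C_0C_1^k$ for all $k$, where $d_{TV}$ is total variation distance. $\gamma\in(0,1)$ is a constant such that $V^\top\mathbb{E}_{s\sim\nu^{\pi_\theta,\mu},a\sim\pi_\theta(\cdot\mid s),s'\sim\mathcal{P}^\mu(\cdot\mid s,a)}[e_s(e_{s'}-e_s)^\top]V\le-\gamma\|V\|^2$ for all $\theta,\mu$ and all $V\in\mathcal{E}_\perp$ (such a constant exists under Assumption 1). *)

theory Defs
  imports "HOL-Analysis.Analysis"
begin

text \<open>A mean field is a function 's \<Rightarrow> real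
  in the probability prob_simplex. The kernel is P :: ('s \<Rightarrow> real) \<Rightarrow> 's \<Rightarrow> 'a \<Rightarrow> 's \<Rightarrow> real,
  with P mu s a s' the probability of moving to s' from s under action a;
  the reward is r :: 's \<Rightarrow> 'a \<Rightarrow> ('s \<Rightarrow> real) \<Rightarrow> real. A policy is pol :: 's \<Rightarrow> 'a \<Rightarrow> real
  with pol s a = pol(a|s).\<close>

definition prob_simplex :: "('b::finite \<Rightarrow> real) set" where
  "prob_simplex = {p. (\<forall>x. 0 \<le> p x) \<and> (\<Sum>x\<in>UNIV. p x) = 1}"

definition is_policy :: "('s::finite \<Rightarrow> 'a::finite \<Rightarrow> real) \<Rightarrow> bool" where
  "is_policy pol \<longleftrightarrow> (\<forall>s. pol s \<in> prob_simplex)"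

definition softmax :: "('s::finite \<Rightarrow> 'a::finite \<Rightarrow> real) \<Rightarrow> 's \<Rightarrow> 'a \<Rightarrow> real" where
  "softmax \<theta> s a = exp (\<theta> s a) / (\<Sum>a'\<in>UNIV. exp (\<theta> s a'))"

definition Pmat :: "(('s::finite \<Rightarrow> real) \<Rightarrow> 's \<Rightarrow> 'a::finite \<Rightarrow> 's \<Rightarrow> real) \<Rightarrow> ('s \<Rightarrow> real)
    \<Rightarrow> ('s \<Rightarrow> 'a \<Rightarrow> real) \<Rightarrow> 's \<Rightarrow> 's \<Rightarrow> real" where
  "Pmat P mu pol s s' = (\<Sum>a\<in>UNIV. P mu s a s' * pol s a)"

fun mpow :: "('s::finite \<Rightarrow> 's \<Rightarrow> real) \<Rightarrow> nat \<Rightarrow> 's \<Rightarrow> 's \<Rightarrow> real" where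
  "mpow M 0 s s' = (if s = s' then 1 else 0)"
| "mpow M (Suc k) s s' = (\<Sum>t\<in>UNIV. mpow M k s t * M t s')"

definition irreducible_chain :: "('s::finite \<Rightarrow> 's \<Rightarrow> real) \<Rightarrow> bool" where
  "irreducible_chain M \<longleftrightarrow> (\<forall>s s'. \<exists>k. 0 < mpow M k s s')"

definition aperiodic_chain :: "('s::finite \<Rightarrow> 's \<Rightarrow> real) \<Rightarrow> bool" where
  "aperiodic_chain M \<longleftrightarrow> (\<forall>s. Gcd {k. 0 < k \<and> 0 < mpow M k s s} = (1::nat))"

definition tv_dist :: "('s::finite \<Rightarrow> real) \<Rightarrow> ('s \<Rightarrow> real) \<Rightarrow> real" where
  "tv_dist p q = (\<Sum>s\<in>UNIV. \<bar>p s - q s\<bar>) / 2"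

text \<open>The (unique, under irreducibility) stationary distribution.\<close>
definition stat_dist :: "('s::finite \<Rightarrow> 's \<Rightarrow> real) \<Rightarrow> 's \<Rightarrow> real" where
  "stat_dist M = (THE nu. nu \<in> prob_simplex \<and> (\<forall>s'. (\<Sum>s\<in>UNIV. nu s * M s s') = nu s'))"

definition nu :: "(('s::finite \<Rightarrow> real) \<Rightarrow> 's \<Rightarrow> 'a::finite \<Rightarrow> 's \<Rightarrow> real) \<Rightarrow> ('s \<Rightarrow> 'a \<Rightarrow> real)
    \<Rightarrow> ('s \<Rightarrow> real) \<Rightarrow> 's \<Rightarrow> real" where
  "nu P pol mu = stat_dist (Pmat P mu pol)"

definition Jfun :: "(('s::finite \<Rightarrow> real) \<Rightarrow> 's \<Rightarrow> 'a::finite \<Rightarrow> 's \<Rightarrow> real)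
    \<Rightarrow> ('s \<Rightarrow> 'a \<Rightarrow> ('s \<Rightarrow> real) \<Rightarrow> real) \<Rightarrow> ('s \<Rightarrow> 'a \<Rightarrow> real) \<Rightarrow> ('s \<Rightarrow> real) \<Rightarrow> real" where
  "Jfun P r pol mu = (\<Sum>s\<in>UNIV. nu P pol mu s * (\<Sum>a\<in>UNIV. pol s a * r s a mu))"

definition Vfun :: "(('s::finite \<Rightarrow> real) \<Rightarrow> 's \<Rightarrow> 'a::finite \<Rightarrow> 's \<Rightarrow> real)
    \<Rightarrow> ('s \<Rightarrow> 'a \<Rightarrow> ('s \<Rightarrow> real) \<Rightarrow> real) \<Rightarrow> ('s \<Rightarrow> 'a \<Rightarrow> real) \<Rightarrow> ('s \<Rightarrow> real) \<Rightarrow> 's \<Rightarrow> real" where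
  "Vfun P r pol mu s = (\<Sum>t. (\<Sum>s'\<in>UNIV. mpow (Pmat P mu pol) t s s' *
        (\<Sum>a\<in>UNIV. pol s' a * r s' a mu)) - Jfun P r pol mu)"

definition assumption1 :: "(('s::finite \<Rightarrow> real) \<Rightarrow> 's \<Rightarrow> 'a::finite \<Rightarrow> 's \<Rightarrow> real)
    \<Rightarrow> real \<Rightarrow> real \<Rightarrow> bool" where
  "assumption1 P C0 C1 \<longleftrightarrow> 1 \<le> C0 \<and> 0 < C1 \<and> C1 < 1 \<and>
     (\<forall>pol mu. is_policy pol \<and> mu \<in> prob_simplex \<longrightarrow>
        irreducible_chain (Pmat P mu pol) \<and> aperiodic_chain (Pmat P mu pol) \<and>
        (\<forall>k s. tv_dist (mpow (Pmat P mu pol) k s) (stat_dist (Pmat P mu pol)) \<le> C0 * C1 ^ k))"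

text \<open>Orthogonal projection onto the complement of span of the all-ones vector.\<close>
definition proj_perp :: "('s::finite \<Rightarrow> real) \<Rightarrow> 's \<Rightarrow> real" where
  "proj_perp V = (\<lambda>s. V s - (\<Sum>t\<in>UNIV. V t) / real CARD('s))"

definition inner_vec :: "('s::finite \<Rightarrow> real) \<Rightarrow> ('s \<Rightarrow> real) \<Rightarrow> real" where
  "inner_vec x y = (\<Sum>s\<in>UNIV. x s * y s)"

definition norm2 :: "('s::finite \<Rightarrow> real) \<Rightarrow> real" where
  "norm2 x = sqrt (\<Sum>s\<in>UNIV. (x s)^2)"

text \<open>bar G^V(theta,V,J,mu) = E[(r(s,a,mu) - J + V(s') - V(s)) e_s], componentwise.\<close>
definition GV :: "(('s::finite \<Rightarrow> real) \<Rightarrow> 's \<Rightarrow> 'a::finite \<Rightarrow> 's \<Rightarrow> real)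
    \<Rightarrow> ('s \<Rightarrow> 'a \<Rightarrow> ('s \<Rightarrow> real) \<Rightarrow> real) \<Rightarrow> ('s \<Rightarrow> 'a \<Rightarrow> real) \<Rightarrow> ('s \<Rightarrow> real) \<Rightarrow> real
    \<Rightarrow> ('s \<Rightarrow> real) \<Rightarrow> 's \<Rightarrow> real" where
  "GV P r \<theta> V J mu = (\<lambda>x. (\<Sum>s\<in>UNIV. nu P (softmax \<theta>) mu s * (\<Sum>a\<in>UNIV. softmax \<theta> s a *
      (\<Sum>s'\<in>UNIV. P mu s a s' * ((r s a mu - J + V s' - V s) * (if s = x then 1 else 0))))))"

definition GJ :: "(('s::finite \<Rightarrow> real) \<Rightarrow> 's \<Rightarrow> 'a::finite \<Rightarrow> 's \<Rightarrow> real)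
    \<Rightarrow> ('s \<Rightarrow> 'a \<Rightarrow> ('s \<Rightarrow> real) \<Rightarrow> real) \<Rightarrow> real \<Rightarrow> ('s \<Rightarrow> 'a \<Rightarrow> real) \<Rightarrow> real
    \<Rightarrow> ('s \<Rightarrow> real) \<Rightarrow> real" where
  "GJ P r cJ \<theta> J mu = (\<Sum>s\<in>UNIV. nu P (softmax \<theta>) mu s * (\<Sum>a\<in>UNIV. softmax \<theta> s a *
      (\<Sum>s'\<in>UNIV. P mu s a s' * (cJ * (r s a mu - J)))))"

text \<open>V^T E[e_s (e_{s'} - e_s)^T] V.\<close>
definition quad_form :: "(('s::finite \<Rightarrow> real) \<Rightarrow> 's \<Rightarrow> 'a::finite \<Rightarrow> 's \<Rightarrow> real)
    \<Rightarrow> ('s \<Rightarrow> 'a \<Rightarrow> real) \<Rightarrow> ('s \<Rightarrow> real) \<Rightarrow> ('s \<Rightarrow> real) \<Rightarrow> real" where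
  "quad_form P \<theta> mu V = (\<Sum>s\<in>UNIV. nu P (softmax \<theta>) mu s * (\<Sum>a\<in>UNIV. softmax \<theta> s a *
      (\<Sum>s'\<in>UNIV. P mu s a s' * (V s * (V s' - V s)))))"

end

theory Submission
  imports Defs
begin

lemma mpow_nonneg:
  assumes "\<And>s s'. 0 \<le> M s s'"
  shows "0 \<le> mpow M k s s'"
  using assms by (induction k arbitrary: s') (auto intro!: sum_nonneg)

lemma mpow_rowsum:
  assumes "\<And>s s'. 0 \<le> M s s'" "\<And>s. (\<Sum>s'\<in>UNIV. M s s') = 1"
  shows "(\<Sum>s'\<in>UNIV. mpow M k s s') = 1"
proof (induction k)
  case 0
  then show ?case by simp
next
  case (Suc k)
  have "(\<Sum>s'\<in>UNIV. mpow M (Suc k) s s') = (\<Sum>t\<in>UNIV. mpow M k s t * (\<Sum>s'\<in>UNIV. M t s'))"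
    by (simp add: sum_distrib_left) (rule sum.swap)
  also have "\<dots> = 1" using Suc assms(2) by simp
  finally show ?case .
qed

lemma mpow_Suc':
  "mpow M (Suc k) s s' = (\<Sum>t\<in>UNIV. M s t * mpow M k t s')"
proof (induction k arbitrary: s')
  case 0
  have "\<And>t. (if s = t then 1 else 0) * M t s' = (if s = t then M s s' else 0)" by simp
  moreover have "\<And>t. M s t * (if t = s' then 1 else 0) = (if t = s' then M s s' else 0)" by simp
  ultimately show ?case by simp
next
  case (Suc k)
  have "mpow M (Suc (Suc k)) s s' = (\<Sum>u\<in>UNIV. (\<Sum>t\<in>UNIV. M s t * mpow M k t u) * M u s')"
    using Suc by simp
  also have "\<dots> = (\<Sum>t\<in>UNIV. M s t * (\<Sum>u\<in>UNIV. mpow M k t u * M u s'))"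
    by (simp add: sum_distrib_left sum_distrib_right mult.assoc) (rule sum.swap)
  finally show ?case by simp
qed

lemma le_zero_geom:
  fixes a c q :: real
  assumes "\<And>k. a \<le> c * q^k" "0 < q" "q < 1"
  shows "a \<le> 0"
proof -
  have "(\<lambda>k. c * q^k) \<longlonglongrightarrow> 0"
    by (intro tendsto_mult_right_zero LIMSEQ_power_zero) (use assms in auto)
  then show ?thesis using assms(1) by (intro LIMSEQ_le_const) auto
qed

lemma row_avg:
  fixes pol :: "'a::finite \<Rightarrow> real" and Q :: "'a \<Rightarrow> 's::finite \<Rightarrow> real"
  assumes "\<And>a. (\<Sum>s'\<in>UNIV. Q a s') = 1"
  shows "(\<Sum>a\<in>UNIV. pol a * (\<Sum>s'\<in>UNIV. Q a s' * (c a + h s')))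
       = (\<Sum>a\<in>UNIV. pol a * c a) + (\<Sum>s'\<in>UNIV. (\<Sum>a\<in>UNIV. Q a s' * pol a) * h s')"
proof -
  have "\<And>a. (\<Sum>s'\<in>UNIV. Q a s' * (c a + h s')) = c a + (\<Sum>s'\<in>UNIV. Q a s' * h s')"
    using assms by (simp add: algebra_simps sum.distrib sum_distrib_left[symmetric])
  then have "(\<Sum>a\<in>UNIV. pol a * (\<Sum>s'\<in>UNIV. Q a s' * (c a + h s')))
     = (\<Sum>a\<in>UNIV. pol a * c a) + (\<Sum>a\<in>UNIV. \<Sum>s'\<in>UNIV. pol a * (Q a s' * h s'))"
    by (simp add: algebra_simps sum.distrib sum_distrib_left)
  also have "(\<Sum>a\<in>UNIV. \<Sum>s'\<in>UNIV. pol a * (Q a s' * h s')) = (\<Sum>s'\<in>UNIV. (\<Sum>a\<in>UNIV. Q a s' * pol a) * h s')"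
    by (subst sum.swap) (simp add: sum_distrib_left sum_distrib_right algebra_simps)
  finally show ?thesis .
qed

lemma key_ineq:
  fixes g w E :: real
  assumes "0 < g" "g < 1" "0 \<le> w"
  shows "- g * w^2 + E * w - E^2 / g \<le> - (g / 2) * (w^2 + E^2)"
proof -
  have "0 \<le> (g * w - E)^2 + (1 - g^2) * E^2"
    using assms by (intro add_nonneg_nonneg mult_nonneg_nonneg) (auto simp: power_le_one)
  then have "0 \<le> ((g * w - E)^2 + (1 - g^2) * E^2) / (2 * g)" using assms by simp
  also have "((g * w - E)^2 + (1 - g^2) * E^2) / (2 * g)
       = - (g / 2) * (w^2 + E^2) - (- g * w^2 + E * w - E^2 / g)"
    using assms by (simp add: field_simps power2_eq_square)
  finally show ?thesis by simp
qed

theorem lemma10: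
  fixes P :: "('s::finite \<Rightarrow> real) \<Rightarrow> 's \<Rightarrow> 'a::finite \<Rightarrow> 's \<Rightarrow> real"
    and r :: "'s \<Rightarrow> 'a \<Rightarrow> ('s \<Rightarrow> real) \<Rightarrow> real"
    and C0 C1 \<gamma> cJ :: real
    and \<theta> :: "'s \<Rightarrow> 'a \<Rightarrow> real" and mu V :: "'s \<Rightarrow> real" and J :: real
  assumes kernel: "\<And>m s a. m \<in> prob_simplex \<Longrightarrow> P m s a \<in> prob_simplex"
    and reward: "\<And>m s a. m \<in> prob_simplex \<Longrightarrow> 0 \<le> r s a m \<and> r s a m \<le> 1"
    and A1: "assumption1 P C0 C1"
    and gamma: "0 < \<gamma>" "\<gamma> < 1"
    and gamma_prop: "\<And>\<theta>' m W. m \<in> prob_simplex \<Longrightarrow> (\<Sum>s\<in>UNIV. W s) = 0 \<Longrightarrow>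
                        quad_form P \<theta>' m W \<le> - \<gamma> * (norm2 W)^2"
    and cJ: "cJ \<ge> 1 / \<gamma>"
    and mu: "mu \<in> prob_simplex"
  shows "inner_vec (proj_perp (\<lambda>s. V s - Vfun P r (softmax \<theta>) mu s)) (proj_perp (GV P r \<theta> V J mu))
           + (J - Jfun P r (softmax \<theta>) mu) * GJ P r cJ \<theta> J mu
         \<le> - (\<gamma> / 2) * ((norm2 (proj_perp (\<lambda>s. V s - Vfun P r (softmax \<theta>) mu s)))^2
                        + (J - Jfun P r (softmax \<theta>) mu)^2)"
proof -
  define pol where "pol = softmax \<theta>"
  define M where "M = Pmat P mu pol"
  define nv where "nv = nu P pol mu"
  define rb where "rb = (\<lambda>s. \<Sum>a\<in>UNIV. pol s a * r s a mu)"
  define Jv where "Jv = Jfun P r pol mu"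
  define Vv where "Vv = Vfun P r pol mu"
  have pol_pos: "\<And>s a. 0 < pol s a"
    unfolding pol_def softmax_def by (intro divide_pos_pos) (auto intro!: sum_pos)
  have pol_sum: "\<And>s. (\<Sum>a\<in>UNIV. pol s a) = 1"
  proof -
    fix s
    have "0 < (\<Sum>a'\<in>UNIV. exp (\<theta> s a'))" by (auto intro!: sum_pos)
    then show "(\<Sum>a\<in>UNIV. pol s a) = 1"
      unfolding pol_def softmax_def by (simp add: sum_divide_distrib[symmetric])
  qed
  have ispol: "is_policy pol"
    unfolding is_policy_def prob_simplex_def using pol_pos pol_sum by (auto intro: less_imp_le)
  have Pnn: "\<And>s a s'. 0 \<le> P mu s a s'" and Psum: "\<And>s a. (\<Sum>s'\<in>UNIV. P mu s a s') = 1"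
    using kernel[OF mu] unfolding prob_simplex_def by auto
  have Mnn: "\<And>s s'. 0 \<le> M s s'"
    unfolding M_def Pmat_def using Pnn pol_pos[THEN less_imp_le] by (auto intro!: sum_nonneg)
  have Msum: "\<And>s. (\<Sum>s'\<in>UNIV. M s s') = 1"
  proof -
    fix s
    have "(\<Sum>s'\<in>UNIV. M s s') = (\<Sum>a\<in>UNIV. pol s a * (\<Sum>s'\<in>UNIV. P mu s a s'))"
      unfolding M_def Pmat_def by (subst sum.swap) (simp add: sum_distrib_left sum_distrib_right algebra_simps)
    then show "(\<Sum>s'\<in>UNIV. M s s') = 1" using Psum pol_sum by simp
  qed
  have tv: "\<And>k s. (\<Sum>y\<in>UNIV. \<bar>mpow M k s y - nv y\<bar>) \<le> 2 * C0 * C1 ^ k"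
  proof -
    fix k s
    have "tv_dist (mpow M k s) nv \<le> C0 * C1 ^ k"
      using A1 ispol mu unfolding assumption1_def nv_def nu_def M_def by blast
    then show "(\<Sum>y\<in>UNIV. \<bar>mpow M k s y - nv y\<bar>) \<le> 2 * C0 * C1 ^ k"
      unfolding tv_dist_def by simp
  qed
  have C1: "0 < C1" "C1 < 1" using A1 unfolding assumption1_def by auto
  have nv_nn: "\<And>y. 0 \<le> nv y"
  proof -
    fix y
    have "- nv y \<le> 0"
    proof (rule le_zero_geom[OF _ C1])
      fix k
      have "- nv y \<le> \<bar>mpow M k y y - nv y\<bar>" using mpow_nonneg[of M k y y, OF Mnn] by linarith
      also have "\<dots> \<le> (\<Sum>y'\<in>UNIV. \<bar>mpow M k y y' - nv y'\<bar>)"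
        by (rule member_le_sum) auto
      finally show "- nv y \<le> (2 * C0) * C1 ^ k" using tv[of k y] by simp
    qed
    then show "0 \<le> nv y" by simp
  qed
  have nv_sum: "(\<Sum>y\<in>UNIV. nv y) = 1"
  proof -
    fix s0 :: 's
    have "\<bar>1 - (\<Sum>y\<in>UNIV. nv y)\<bar> \<le> 0"
    proof (rule le_zero_geom[OF _ C1])
      fix k
      have "\<bar>1 - (\<Sum>y\<in>UNIV. nv y)\<bar> = \<bar>\<Sum>y\<in>UNIV. mpow M k s0 y - nv y\<bar>"
        using mpow_rowsum[of M k s0, OF Mnn Msum] by (simp add: sum_subtractf)
      also have "\<dots> \<le> (\<Sum>y\<in>UNIV. \<bar>mpow M k s0 y - nv y\<bar>)" by (rule sum_abs)
      finally show "\<bar>1 - (\<Sum>y\<in>UNIV. nv y)\<bar> \<le> (2 * C0) * C1 ^ k" using tv[of k s0] by simp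
    qed
    then show ?thesis by simp
  qed
  have rb_bd: "\<And>s. 0 \<le> rb s \<and> rb s \<le> 1"
  proof -
    fix s
    have "0 \<le> rb s" unfolding rb_def using pol_pos[THEN less_imp_le] reward[OF mu] by (auto intro!: sum_nonneg)
    moreover have "rb s \<le> (\<Sum>a\<in>UNIV. pol s a * 1)" unfolding rb_def
      using pol_pos reward[OF mu] by (intro sum_mono mult_left_mono) (auto intro: less_imp_le)
    ultimately show "0 \<le> rb s \<and> rb s \<le> 1" using pol_sum by simp
  qed
  have Jv_eq: "Jv = (\<Sum>y\<in>UNIV. nv y * rb y)"
    unfolding Jv_def Jfun_def nv_def rb_def ..
  define f where "f = (\<lambda>t x. (\<Sum>y\<in>UNIV. mpow M t x y * rb y) - Jv)"
  have Vv_eq: "\<And>x. Vv x = (\<Sum>t. f t x)"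
    unfolding Vv_def Vfun_def f_def rb_def Jv_def M_def ..
  have f_bd: "\<And>t x. \<bar>f t x\<bar> \<le> 2 * C0 * C1 ^ t"
  proof -
    fix t x
    have "f t x = (\<Sum>y\<in>UNIV. (mpow M t x y - nv y) * rb y)"
      unfolding f_def Jv_eq by (simp add: sum_subtractf algebra_simps)
    also have "\<bar>\<dots>\<bar> \<le> (\<Sum>y\<in>UNIV. \<bar>(mpow M t x y - nv y) * rb y\<bar>)" by (rule sum_abs)
    also have "\<dots> \<le> (\<Sum>y\<in>UNIV. \<bar>mpow M t x y - nv y\<bar>)"
      using rb_bd by (intro sum_mono) (simp add: abs_mult mult_left_le)
    also have "\<dots> \<le> 2 * C0 * C1 ^ t" by (rule tv)
    finally show "\<bar>f t x\<bar> \<le> 2 * C0 * C1 ^ t" .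
  qed
  have f_summ: "\<And>x. summable (\<lambda>t. f t x)"
  proof -
    fix x
    have "summable (\<lambda>t. 2 * C0 * C1 ^ t)" using C1 by (intro summable_mult summable_geometric) auto
    then show "summable (\<lambda>t. f t x)"
      by (rule summable_comparison_test[rotated]) (use f_bd in auto)
  qed
  have f_step: "\<And>t x. (\<Sum>y\<in>UNIV. M x y * f t y) = f (Suc t) x"
  proof -
    fix t x
    have "(\<Sum>y\<in>UNIV. M x y * f t y) = (\<Sum>y\<in>UNIV. \<Sum>z\<in>UNIV. M x y * (mpow M t y z * rb z)) - Jv"
      unfolding f_def using Msum[of x] by (simp add: right_diff_distrib sum_subtractf sum_distrib_left sum_distrib_right[symmetric])
    also have "\<dots> = (\<Sum>z\<in>UNIV. mpow M (Suc t) x z * rb z) - Jv"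
      unfolding mpow_Suc' by (subst sum.swap) (simp add: sum_distrib_right mult.assoc)
    finally show "(\<Sum>y\<in>UNIV. M x y * f t y) = f (Suc t) x" unfolding f_def .
  qed
  have poisson: "\<And>x. Vv x = rb x - Jv + (\<Sum>y\<in>UNIV. M x y * Vv y)"
  proof -
    fix x
    have "(\<Sum>y\<in>UNIV. M x y * Vv y) = (\<Sum>y\<in>UNIV. \<Sum>t. M x y * f t y)"
      unfolding Vv_eq by (simp add: suminf_mult f_summ)
    also have "\<dots> = (\<Sum>t. \<Sum>y\<in>UNIV. M x y * f t y)"
      by (rule suminf_sum[symmetric]) (simp add: f_summ summable_mult)
    also have "\<dots> = (\<Sum>t. f (Suc t) x)" by (simp add: f_step)
    finally have "(\<Sum>y\<in>UNIV. M x y * Vv y) = (\<Sum>t. f (Suc t) x)" .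
    moreover have "Vv x = f 0 x + (\<Sum>t. f (Suc t) x)"
      unfolding Vv_eq using suminf_split_head[OF f_summ[of x]] by simp
    moreover have "f 0 x = rb x - Jv"
    proof -
      have "\<And>y. mpow M 0 x y * rb y = (if x = y then rb x else 0)" by simp
      then show ?thesis unfolding f_def by simp
    qed
    ultimately show "Vv x = rb x - Jv + (\<Sum>y\<in>UNIV. M x y * Vv y)" by simp
  qed
  define d where "d = (\<lambda>s. V s - Vv s)"
  define cst where "cst = (\<Sum>t\<in>UNIV. d t) / real CARD('s)"
  define W where "W = proj_perp d"
  define e where "e = J - Jv"
  have Wx: "\<And>x. W x = d x - cst" unfolding W_def proj_perp_def cst_def ..
  have sumW: "(\<Sum>x\<in>UNIV. W x) = 0"
    unfolding Wx by (simp add: sum_subtractf cst_def)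
  have inner_proj: "\<And>G. inner_vec W (proj_perp G) = inner_vec W G"
  proof -
    fix G :: "'s \<Rightarrow> real"
    have "inner_vec W (proj_perp G) = inner_vec W G - (\<Sum>x\<in>UNIV. W x) * ((\<Sum>t\<in>UNIV. G t) / real CARD('s))"
      unfolding inner_vec_def proj_perp_def by (simp add: right_diff_distrib sum_subtractf sum_distrib_right sum_divide_distrib)
    then show "inner_vec W (proj_perp G) = inner_vec W G" using sumW by simp
  qed
  have GV_eq: "\<And>x. GV P r \<theta> V J mu x = nv x * (rb x - J + (\<Sum>y\<in>UNIV. M x y * V y) - V x)"
  proof -
    fix x
    have "GV P r \<theta> V J mu x = (\<Sum>s\<in>UNIV. if s = x then nv s * (\<Sum>a\<in>UNIV. pol s a *
      (\<Sum>s'\<in>UNIV. P mu s a s' * ((r s a mu - J - V s) + V s'))) else 0)"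
      unfolding GV_def pol_def[symmetric] nv_def[symmetric]
      by (intro sum.cong) (auto simp: algebra_simps)
    also have "\<dots> = nv x * (\<Sum>a\<in>UNIV. pol x a * (\<Sum>s'\<in>UNIV. P mu x a s' * ((r x a mu - J - V x) + V s')))"
      by simp
    also have "\<dots> = nv x * ((\<Sum>a\<in>UNIV. pol x a * (r x a mu - J - V x)) + (\<Sum>s'\<in>UNIV. M x s' * V s'))"
      by (subst row_avg) (auto simp: Psum M_def Pmat_def)
    also have "(\<Sum>a\<in>UNIV. pol x a * (r x a mu - J - V x)) = rb x - J - V x"
      unfolding rb_def using pol_sum[of x]
      by (simp add: right_diff_distrib sum_subtractf sum_distrib_right[symmetric])
    finally show "GV P r \<theta> V J mu x = nv x * (rb x - J + (\<Sum>y\<in>UNIV. M x y * V y) - V x)"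
      by simp
  qed
  have quad_eq: "quad_form P \<theta> mu W = (\<Sum>s\<in>UNIV. nv s * (W s * ((\<Sum>y\<in>UNIV. M s y * W y) - W s)))"
    unfolding quad_form_def pol_def[symmetric] nv_def[symmetric]
  proof (intro sum.cong refl arg_cong2[where f="(*)"])
    fix s
    have "(\<Sum>a\<in>UNIV. pol s a * (\<Sum>s'\<in>UNIV. P mu s a s' * (W s * (W s' - W s))))
      = (\<Sum>a\<in>UNIV. pol s a * (\<Sum>s'\<in>UNIV. P mu s a s' * (- (W s * W s) + W s * W s')))"
      by (simp add: algebra_simps)
    also have "\<dots> = (\<Sum>a\<in>UNIV. pol s a * (- (W s * W s))) + (\<Sum>s'\<in>UNIV. M s s' * (W s * W s'))"
      by (subst row_avg) (auto simp: Psum M_def Pmat_def)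
    also have "(\<Sum>a\<in>UNIV. pol s a * (- (W s * W s))) = - (W s * W s)"
      using pol_sum[of s] by (simp add: sum_negf sum_distrib_right[symmetric])
    also have "- (W s * W s) + (\<Sum>s'\<in>UNIV. M s s' * (W s * W s')) = W s * ((\<Sum>y\<in>UNIV. M s y * W y) - W s)"
      by (simp add: sum_distrib_left algebra_simps)
    finally show "(\<Sum>a\<in>UNIV. pol s a * (\<Sum>s'\<in>UNIV. P mu s a s' * (W s * (W s' - W s))))
      = W s * ((\<Sum>y\<in>UNIV. M s y * W y) - W s)" .
  qed
  have GJ_eq: "GJ P r cJ \<theta> J mu = - cJ * e"
  proof -
    have "GJ P r cJ \<theta> J mu = (\<Sum>s\<in>UNIV. nv s * (cJ * (rb s - J)))"
      unfolding GJ_def pol_def[symmetric] nv_def[symmetric]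
    proof (intro sum.cong refl arg_cong2[where f="(*)"])
      fix s
      have "(\<Sum>a\<in>UNIV. pol s a * (\<Sum>s'\<in>UNIV. P mu s a s' * (cJ * (r s a mu - J))))
        = (\<Sum>a\<in>UNIV. pol s a * (\<Sum>s'\<in>UNIV. P mu s a s' * (cJ * (r s a mu - J) + 0)))"
        by simp
      also have "\<dots> = (\<Sum>a\<in>UNIV. pol s a * (cJ * (r s a mu - J)))"
        by (subst row_avg) (auto simp: Psum)
      also have "\<dots> = cJ * (rb s - J)"
      proof -
        have "(\<Sum>a\<in>UNIV. pol s a * (cJ * (r s a mu - J))) = cJ * (\<Sum>a\<in>UNIV. pol s a * r s a mu) - cJ * J * (\<Sum>a\<in>UNIV. pol s a)"
          by (simp add: algebra_simps sum_subtractf sum_distrib_left sum.distrib)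
        then show ?thesis unfolding rb_def using pol_sum[of s] by (simp add: algebra_simps)
      qed
      finally show "(\<Sum>a\<in>UNIV. pol s a * (\<Sum>s'\<in>UNIV. P mu s a s' * (cJ * (r s a mu - J))))
        = cJ * (rb s - J)" .
    qed
    also have "\<dots> = cJ * ((\<Sum>s\<in>UNIV. nv s * rb s) - J * (\<Sum>s\<in>UNIV. nv s))"
      by (simp add: sum_distrib_left sum_distrib_right right_diff_distrib sum_subtractf algebra_simps)
    finally show ?thesis using nv_sum unfolding e_def Jv_eq by (simp add: algebra_simps)
  qed
  have MW: "\<And>x. (\<Sum>y\<in>UNIV. M x y * d y) - d x = (\<Sum>y\<in>UNIV. M x y * W y) - W x"
  proof -
    fix x
    have "(\<Sum>y\<in>UNIV. M x y * W y) = (\<Sum>y\<in>UNIV. M x y * d y) - cst * (\<Sum>y\<in>UNIV. M x y)"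
      unfolding Wx by (simp add: right_diff_distrib sum_subtractf sum_distrib_left algebra_simps)
    then show "(\<Sum>y\<in>UNIV. M x y * d y) - d x = (\<Sum>y\<in>UNIV. M x y * W y) - W x"
      using Msum[of x] Wx[of x] by simp
  qed
  have GV_eq2: "\<And>x. GV P r \<theta> V J mu x = nv x * (((\<Sum>y\<in>UNIV. M x y * W y) - W x) - e)"
  proof -
    fix x
    have "(\<Sum>y\<in>UNIV. M x y * d y) = (\<Sum>y\<in>UNIV. M x y * V y) - (\<Sum>y\<in>UNIV. M x y * Vv y)"
      unfolding d_def by (simp add: right_diff_distrib sum_subtractf)
    then have "rb x - J + (\<Sum>y\<in>UNIV. M x y * V y) - V x = ((\<Sum>y\<in>UNIV. M x y * d y) - d x) - e"
      using poisson[of x] unfolding d_def e_def by simp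
    then show "GV P r \<theta> V J mu x = nv x * (((\<Sum>y\<in>UNIV. M x y * W y) - W x) - e)"
      using GV_eq[of x] MW[of x] by simp
  qed
  have inner_eq: "inner_vec W (GV P r \<theta> V J mu) = quad_form P \<theta> mu W - e * (\<Sum>x\<in>UNIV. W x * nv x)"
    unfolding inner_vec_def GV_eq2 quad_eq
    by (simp add: algebra_simps sum_subtractf sum_distrib_left sum.distrib)
  define w where "w = norm2 W"
  have sq0: "0 \<le> (\<Sum>x\<in>UNIV. (W x)^2)" by (intro sum_nonneg) auto
  then have w2: "w^2 = (\<Sum>x\<in>UNIV. (W x)^2)" unfolding w_def norm2_def
    by simp
  have w0: "0 \<le> w" unfolding w_def norm2_def using sq0 by simp
  have Wle: "\<And>x. \<bar>W x\<bar> \<le> w"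
  proof -
    fix x
    have "(W x)^2 \<le> (\<Sum>x\<in>UNIV. (W x)^2)" by (rule member_le_sum) auto
    then have "\<bar>W x\<bar>^2 \<le> w^2" using w2 by simp
    then show "\<bar>W x\<bar> \<le> w" using w0 by (rule power2_le_imp_le)
  qed
  have cs: "\<bar>\<Sum>x\<in>UNIV. W x * nv x\<bar> \<le> w"
  proof -
    have "\<bar>\<Sum>x\<in>UNIV. W x * nv x\<bar> \<le> (\<Sum>x\<in>UNIV. \<bar>W x * nv x\<bar>)" by (rule sum_abs)
    also have "\<dots> \<le> (\<Sum>x\<in>UNIV. w * nv x)"
      using Wle nv_nn by (intro sum_mono) (simp add: abs_mult mult_right_mono)
    also have "\<dots> = w" using nv_sum by (simp add: sum_distrib_left[symmetric])
    finally show ?thesis .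
  qed
  have q: "quad_form P \<theta> mu W \<le> - \<gamma> * w^2"
    using gamma_prop[OF mu sumW] unfolding w_def .
  have ebound: "- e * (\<Sum>x\<in>UNIV. W x * nv x) \<le> \<bar>e\<bar> * w"
  proof -
    have "- e * (\<Sum>x\<in>UNIV. W x * nv x) \<le> \<bar>e\<bar> * \<bar>\<Sum>x\<in>UNIV. W x * nv x\<bar>"
    proof -
      have "- e * (\<Sum>x\<in>UNIV. W x * nv x) \<le> \<bar>- e * (\<Sum>x\<in>UNIV. W x * nv x)\<bar>" by (rule abs_ge_self)
      then show ?thesis by (simp add: abs_mult)
    qed
    also have "\<dots> \<le> \<bar>e\<bar> * w" using cs by (simp add: mult_left_mono)
    finally show ?thesis .
  qed
  have cJe: "e^2 / \<gamma> \<le> cJ * e^2"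
  proof -
    have "e^2 / \<gamma> = (1 / \<gamma>) * e^2" by simp
    also have "\<dots> \<le> cJ * e^2" by (rule mult_right_mono[OF cJ]) simp
    finally show ?thesis .
  qed
  have key: "- \<gamma> * w^2 + \<bar>e\<bar> * w - e^2 / \<gamma> \<le> - (\<gamma> / 2) * (w^2 + e^2)"
    using key_ineq[OF gamma w0, of "\<bar>e\<bar>"] by simp
  have "inner_vec W (proj_perp (GV P r \<theta> V J mu)) + e * GJ P r cJ \<theta> J mu
      = quad_form P \<theta> mu W - e * (\<Sum>x\<in>UNIV. W x * nv x) - cJ * e^2"
    unfolding inner_proj inner_eq GJ_eq by (simp add: power2_eq_square)
  also have "\<dots> \<le> - \<gamma> * w^2 + \<bar>e\<bar> * w - e^2 / \<gamma>"
    using q ebound cJe by linarith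
  also have "\<dots> \<le> - (\<gamma> / 2) * (w^2 + e^2)" by (rule key)
  finally show ?thesis
    unfolding W_def d_def e_def w_def Vv_def Jv_def pol_def .
qed

end
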